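(* Let $\tau$ be any substitution whose ll and rl graphs are subfixed, and let $W=\{u\in\mathcal{A}^2 : \exists a\in\mathcal{A},\ u \text{ is a factor of } \tau(a)\}$. Then \[\mathcal{L}_2(\tau)=W\cup\{\mathrm{rl}(\tau(a))\,\mathrm{ll}(\tau(b)) : ab\in W\},\] where for a nonempty word $z$, $\mathrm{ll}(z)$ and $\mathrm{rl}(z)$ denote its leftmost and rightmost letter.
   Context: Let $\mathcal{A}$ be a finite nonempty alphabet, $\mathcal{A}^2$ the set of words of length $2$. A word $u$ is a factor of $v$ if $v=w_1uw_2$ for some words $w_1,w_2$. A substitution is a map $\tau:\mathcal{A}\to\mathcal{A}^+$ (nonempty words), extended to a concatenation-respecting map on words. The language $\mathcal{L}(\tau)$ is the set of words that are factors of $\tau^n(a)$ for some letter $a$ and some $n\ge1$, and $\mathcal{L}_2(\tau)$ is its set of words of length $2$. The ll graph (resp. rl graph) is the directed graph on vertex set $\mathcal{A}$ with exactly one edge from each letter $a$ to the leftmost (resp. rightmost) letter of $\tau(a)$. Such a graph is subfixed if for every vertex $x$, either the edge leaving $x$ goes to $x$, or it goes to a vertex $y$ whose outgoing edge goes to $y$ itself. *)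

theory Defs
  imports Main
begin

text \<open>Words over the alphabet 'a are lists; a substitution is a map
  tau :: 'a => 'a list with nonempty images, extended to words by concatenation.\<close>

definition is_factor :: "'a list \<Rightarrow> 'a list \<Rightarrow> bool" where
  "is_factor u v \<longleftrightarrow> (\<exists>w1 w2. v = w1 @ u @ w2)"

definition subst_word :: "('a \<Rightarrow> 'a list) \<Rightarrow> 'a list \<Rightarrow> 'a list" where
  "subst_word \<tau> w = concat (map \<tau> w)"

definition language :: "('a \<Rightarrow> 'a list) \<Rightarrow> 'a list set" where
  "language \<tau> = {u. \<exists>a n. n \<ge> 1 \<and> is_factor u ((subst_word \<tau> ^^ n) [a])}"

definition language2 :: "('a \<Rightarrow> 'a list) \<Rightarrow> 'a list set" where
  "language2 \<tau> = {u \<in> language \<tau>. length u = 2}"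

definition ll_graph :: "('a \<Rightarrow> 'a list) \<Rightarrow> 'a \<Rightarrow> 'a" where
  "ll_graph \<tau> a = hd (\<tau> a)"

definition rl_graph :: "('a \<Rightarrow> 'a list) \<Rightarrow> 'a \<Rightarrow> 'a" where
  "rl_graph \<tau> a = last (\<tau> a)"

text \<open>A functional graph (one outgoing edge per vertex, given by g) is subfixed.\<close>
definition subfixed :: "('a \<Rightarrow> 'a) \<Rightarrow> bool" where
  "subfixed g \<longleftrightarrow> (\<forall>x. g x = x \<or> g (g x) = g x)"

end

theory Submission
  imports Defs
begin

lemma subfixed_idem: "subfixed g \<Longrightarrow> g (g x) = g x"
  unfolding subfixed_def by metis

lemma factor_trans: "is_factor u v \<Longrightarrow> is_factor v w \<Longrightarrow> is_factor u w"
  unfolding is_factor_def by (metis append.assoc)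

lemma factor_Cons: "is_factor [p,q] (x # ys) \<longleftrightarrow> (ys \<noteq> [] \<and> p = x \<and> q = hd ys) \<or> is_factor [p,q] ys"
proof
  assume "is_factor [p,q] (x # ys)"
  then obtain w1 w2 where e: "x # ys = w1 @ [p,q] @ w2" unfolding is_factor_def by blast
  show "(ys \<noteq> [] \<and> p = x \<and> q = hd ys) \<or> is_factor [p,q] ys"
  proof (cases w1)
    case Nil then show ?thesis using e by auto
  next
    case (Cons z zs) then show ?thesis using e unfolding is_factor_def by auto
  qed
next
  assume "(ys \<noteq> [] \<and> p = x \<and> q = hd ys) \<or> is_factor [p,q] ys"
  then show "is_factor [p,q] (x # ys)"
  proof
    assume h: "ys \<noteq> [] \<and> p = x \<and> q = hd ys"
    then have "x # ys = [] @ [p,q] @ tl ys" by (cases ys) auto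
    then show ?thesis unfolding is_factor_def by blast
  next
    assume "is_factor [p,q] ys"
    then obtain w1 w2 where "ys = w1 @ [p,q] @ w2" unfolding is_factor_def by blast
    then have "x # ys = (x#w1) @ [p,q] @ w2" by simp
    then show ?thesis unfolding is_factor_def by blast
  qed
qed

lemma factor_append: "is_factor [p,q] (xs @ ys) \<longleftrightarrow> is_factor [p,q] xs \<or> is_factor [p,q] ys
   \<or> (xs \<noteq> [] \<and> ys \<noteq> [] \<and> p = last xs \<and> q = hd ys)"
proof (induction xs)
  case Nil
  then show ?case by (auto simp: is_factor_def)
next
  case (Cons x xs)
  have e: "(x # xs) @ ys = x # (xs @ ys)" by simp
  show ?case
  proof (cases xs)
    case Nil
    have "\<not> is_factor [p,q] [x]" by (auto simp: is_factor_def Cons_eq_append_conv)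
    then show ?thesis using Nil by (simp add: factor_Cons) blast
  next
    case (Cons z zs)
    have "hd (xs @ ys) = z" using Cons by simp
    then show ?thesis unfolding e factor_Cons Cons.IH using Cons
      by (auto simp: factor_Cons)
  qed
qed

lemma factor_subst_elem: "x \<in> set w \<Longrightarrow> is_factor u (\<tau> x) \<Longrightarrow> is_factor u (subst_word \<tau> w)"
proof -
  assume "x \<in> set w" "is_factor u (\<tau> x)"
  then obtain w1 w2 where "w = w1 @ x # w2" by (meson split_list)
  then have "subst_word \<tau> w = subst_word \<tau> w1 @ \<tau> x @ subst_word \<tau> w2"
    by (simp add: subst_word_def)
  then have "is_factor (\<tau> x) (subst_word \<tau> w)" unfolding is_factor_def by blast
  then show ?thesis using \<open>is_factor u (\<tau> x)\<close> factor_trans by blast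
qed

lemma factor_subst_pair:
  assumes ne: "\<And>a. \<tau> a \<noteq> []" and f: "is_factor [a,b] w"
  shows "is_factor [last (\<tau> a), hd (\<tau> b)] (subst_word \<tau> w)"
proof -
  obtain w1 w2 where "w = w1 @ [a,b] @ w2" using f unfolding is_factor_def by blast
  then have e: "subst_word \<tau> w = subst_word \<tau> w1 @ (\<tau> a @ \<tau> b) @ subst_word \<tau> w2"
    by (simp add: subst_word_def)
  have "is_factor [last (\<tau> a), hd (\<tau> b)] (\<tau> a @ \<tau> b)"
    using ne[of a] ne[of b] by (simp add: factor_append)
  moreover have "is_factor (\<tau> a @ \<tau> b) (subst_word \<tau> w)" using e unfolding is_factor_def by blast
  ultimately show ?thesis using factor_trans by blast
qed

lemma factor_subst_cases:
  assumes ne: "\<And>a. \<tau> a \<noteq> []"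
  shows "is_factor [p,q] (subst_word \<tau> w) \<Longrightarrow>
    (\<exists>x\<in>set w. is_factor [p,q] (\<tau> x)) \<or> (\<exists>x y. is_factor [x,y] w \<and> p = last (\<tau> x) \<and> q = hd (\<tau> y))"
proof (induction w)
  case Nil
  then show ?case by (simp add: subst_word_def is_factor_def)
next
  case (Cons x w)
  have e: "subst_word \<tau> (x # w) = \<tau> x @ subst_word \<tau> w" by (simp add: subst_word_def)
  from Cons.prems[unfolded e, unfolded factor_append]
  consider "is_factor [p,q] (\<tau> x)" | "is_factor [p,q] (subst_word \<tau> w)"
    | "subst_word \<tau> w \<noteq> [] \<and> p = last (\<tau> x) \<and> q = hd (subst_word \<tau> w)" by blast
  then show ?case
  proof cases
    case 1 then show ?thesis by auto
  next
    case 2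
    then have "(\<exists>x\<in>set w. is_factor [p,q] (\<tau> x)) \<or> (\<exists>x y. is_factor [x,y] w \<and> p = last (\<tau> x) \<and> q = hd (\<tau> y))"
      using Cons.IH by blast
    then show ?thesis
    proof
      assume "\<exists>x\<in>set w. is_factor [p,q] (\<tau> x)"
      then show ?thesis by auto
    next
      assume "\<exists>x y. is_factor [x,y] w \<and> p = last (\<tau> x) \<and> q = hd (\<tau> y)"
      then obtain x' y where h: "is_factor [x',y] w" "p = last (\<tau> x')" "q = hd (\<tau> y)" by blast
      have "is_factor [x',y] (x # w)" using h(1) by (simp add: factor_Cons)
      then show ?thesis using h by blast
    qed
  next
    case 3
    then obtain y ys where w: "w = y # ys" by (cases w) (auto simp: subst_word_def)
    have "hd (subst_word \<tau> w) = hd (\<tau> y)" using w ne[of y] by (simp add: subst_word_def)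
    moreover have "is_factor [x,y] (x # w)" using w by (simp add: factor_Cons)
    ultimately have "is_factor [x,y] (x # w) \<and> p = last (\<tau> x) \<and> q = hd (\<tau> y)" using 3 by simp
    then show ?thesis by blast
  qed
qed

theorem mainTheorem12:
  fixes \<tau> :: "'a::finite \<Rightarrow> 'a list"
  assumes nonempty: "\<And>a. \<tau> a \<noteq> []"
    and ll_sub: "subfixed (ll_graph \<tau>)"
    and rl_sub: "subfixed (rl_graph \<tau>)"
  defines "W \<equiv> {u. length u = 2 \<and> (\<exists>a. is_factor u (\<tau> a))}"
  shows "language2 \<tau> = W \<union> {[last (\<tau> a), hd (\<tau> b)] | a b. [a, b] \<in> W}"
proof
  let ?S = "W \<union> {[last (\<tau> a), hd (\<tau> b)] | a b. [a, b] \<in> W}"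
  let ?s = "subst_word \<tau>"
  have hh: "hd (\<tau> (hd (\<tau> b))) = hd (\<tau> b)" for b
    using subfixed_idem[OF ll_sub, of b] by (simp add: ll_graph_def)
  have rr: "last (\<tau> (last (\<tau> b))) = last (\<tau> b)" for b
    using subfixed_idem[OF rl_sub, of b] by (simp add: rl_graph_def)
  have key: "\<forall>p q. is_factor [p,q] ((?s ^^ n) [c]) \<longrightarrow> [p,q] \<in> ?S" for n c
  proof (induction n)
    case 0
    have "\<not> is_factor [p,q] [c]" for p q by (auto simp: is_factor_def Cons_eq_append_conv)
    then show ?case by simp
  next
    case (Suc n)
    show ?case
    proof (intro allI impI)
      fix p q
      assume "is_factor [p,q] ((?s ^^ Suc n) [c])"
      then have "is_factor [p,q] (?s ((?s ^^ n) [c]))" by simp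
      from factor_subst_cases[OF nonempty this]
      show "[p,q] \<in> ?S"
      proof
        assume "\<exists>x\<in>set ((?s ^^ n) [c]). is_factor [p,q] (\<tau> x)"
        then obtain x where "is_factor [p,q] (\<tau> x)" by blast
        then have "[p,q] \<in> W" unfolding W_def by auto
        then show ?thesis by (rule UnI1)
      next
        assume "\<exists>x y. is_factor [x,y] ((?s ^^ n) [c]) \<and> p = last (\<tau> x) \<and> q = hd (\<tau> y)"
        then obtain x y where fx: "is_factor [x,y] ((?s ^^ n) [c])" and xy': "p = last (\<tau> x)" "q = hd (\<tau> y)"
          by blast
        have xy: "[x,y] \<in> ?S" "p = last (\<tau> x)" "q = hd (\<tau> y)"
          using Suc.IH[rule_format, OF fx] xy' by auto
        from xy(1) show ?thesis
        proof
          assume "[x,y] \<in> W"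
          then have "[p,q] \<in> {[last (\<tau> a), hd (\<tau> b)] | a b. [a, b] \<in> W}"
            using xy(2,3) by blast
          then show ?thesis by (rule UnI2)
        next
          assume "[x,y] \<in> {[last (\<tau> a), hd (\<tau> b)] | a b. [a, b] \<in> W}"
          then obtain a b where "[a,b] \<in> W" "x = last (\<tau> a)" "y = hd (\<tau> b)" by blast
          then have "p = last (\<tau> a)" "q = hd (\<tau> b)" using xy(2,3) rr hh by simp_all
          then have "[p,q] \<in> {[last (\<tau> a), hd (\<tau> b)] | a b. [a, b] \<in> W}"
            using \<open>[a,b] \<in> W\<close> by blast
          then show ?thesis by (rule UnI2)
        qed
      qed
    qed
  qed
  show "language2 \<tau> \<subseteq> ?S"
  proof
    fix u assume "u \<in> language2 \<tau>"
    then obtain c n where u: "length u = 2" "is_factor u ((?s ^^ n) [c])"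
      unfolding language2_def language_def by blast
    from u(1) obtain p q where "u = [p,q]"
      by (auto simp: numeral_2_eq_2 length_Suc_conv)
    then show "u \<in> ?S" using key[rule_format, of p q n c] u(2) by simp
  qed
  show "?S \<subseteq> language2 \<tau>"
  proof
    fix u assume "u \<in> ?S"
    then show "u \<in> language2 \<tau>"
    proof
      assume "u \<in> W"
      then obtain a where a: "length u = 2" "is_factor u (\<tau> a)" unfolding W_def by blast
      have "(?s ^^ 1) [a] = \<tau> a" by (simp add: subst_word_def)
      then have "is_factor u ((?s ^^ 1) [a]) \<and> (1::nat) \<ge> 1" using a by simp
      then have "u \<in> language \<tau>" unfolding language_def by blast
      then show ?thesis using a by (simp add: language2_def)
    next
      assume "u \<in> {[last (\<tau> a), hd (\<tau> b)] | a b. [a, b] \<in> W}"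
      then obtain a b c where ab: "u = [last (\<tau> a), hd (\<tau> b)]" "is_factor [a,b] (\<tau> c)"
        unfolding W_def by blast
      have "(?s ^^ 2) [c] = ?s (\<tau> c)" by (simp add: subst_word_def numeral_2_eq_2)
      then have "is_factor u ((?s ^^ 2) [c])" using factor_subst_pair[OF nonempty ab(2)] ab(1) by simp
      then have "is_factor u ((?s ^^ 2) [c]) \<and> (2::nat) \<ge> 1" by simp
      then have "u \<in> language \<tau>" unfolding language_def by blast
      then show ?thesis using ab(1) by (simp add: language2_def)
    qed
  qed
qed

end
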